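(* Let $Q$ be a quadrangulation with a strong labeling. Walking along the boundary of any bounded face of $Q$ in clockwise order, the labels of consecutive angles change precisely when moving from a black vertex to a white vertex.
   Context: A quadrangulation is a simple plane graph with at least four vertices all of whose faces (including the outer face) are bounded by $4$-cycles; it is bipartite, and its vertices are properly colored black and white. An angle is an incidence of a vertex with a face (a corner of a face at a vertex). A strong labeling of $Q$ is a map from the angles of $Q$ to $\{0,1\}$ such that: (G0) the two black vertices on the outer face are named $s_0$ and $s_1$, and all angles at $s_i$ are labeled $i$; (G1) for each vertex $v\notin\{s_0,s_1\}$ the labels around $v$ form one non-empty cyclic interval of $1$s and one non-empty cyclic interval of $0$s; (G2) for each edge, the two labels on the two sides of the edge coincide at one endpoint and differ at the other; (G3) the labels in each bounded face, read cyclically, are $0,0,1,1$, and reading the labels of the outer face in clockwise order starting at $s_0$ they are $0,0,1,1$. *)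

theory Defs
  imports Main
begin

text \<open>
  Plane graphs are represented by combinatorial maps (rotation systems).
  D is a finite set of darts (directed half-edges); alpha is the fixed-point-free
  involution reversing a dart; sigma is the counterclockwise rotation of the darts
  leaving a vertex; tail d is the vertex a dart d leaves; head d = tail (alpha d).
  Vertices are the tail-fibres, which must be exactly the sigma-orbits.
  Faces are the orbits of phi = sigma o alpha; with sigma counterclockwise, phi
  walks along each face with the face on the right, i.e. bounded faces are
  traversed clockwise.  Planarity of the (connected) map is expressed by
  Euler's formula V - E + F = 2.

  Angles: the dart d represents the angle (corner) at the vertex head d between
  the darts alpha d and sigma (alpha d) = phi d; this corner lies in the face
  (phi-orbit) of d.  Consecutive angles in clockwise order along a face are
  d and phi d.  The angles around a vertex in counterclockwise order are
  d, rho d, rho (rho d), ... with rho d = alpha (sigma (alpha d)).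
\<close>

definition orb :: "('a \<Rightarrow> 'a) \<Rightarrow> 'a \<Rightarrow> 'a set" where
  "orb f x = {(f ^^ n) x | n. True}"

definition phi :: "('d \<Rightarrow> 'd) \<Rightarrow> ('d \<Rightarrow> 'd) \<Rightarrow> 'd \<Rightarrow> 'd" where
  "phi \<alpha> \<sigma> d = \<sigma> (\<alpha> d)"

definition rho :: "('d \<Rightarrow> 'd) \<Rightarrow> ('d \<Rightarrow> 'd) \<Rightarrow> 'd \<Rightarrow> 'd" where
  "rho \<alpha> \<sigma> d = \<alpha> (\<sigma> (\<alpha> d))"

definition head :: "('d \<Rightarrow> 'd) \<Rightarrow> ('d \<Rightarrow> 'v) \<Rightarrow> 'd \<Rightarrow> 'v" where
  "head \<alpha> tail d = tail (\<alpha> d)"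

definition faces :: "'d set \<Rightarrow> ('d \<Rightarrow> 'd) \<Rightarrow> ('d \<Rightarrow> 'd) \<Rightarrow> 'd set set" where
  "faces D \<alpha> \<sigma> = (\<lambda>d. orb (phi \<alpha> \<sigma>) d) ` D"

definition edges :: "'d set \<Rightarrow> ('d \<Rightarrow> 'd) \<Rightarrow> 'd set set" where
  "edges D \<alpha> = (\<lambda>d. {d, \<alpha> d}) ` D"

text \<open>A connected plane map (genus 0 via Euler's formula), with a distinguished
  outer face, the face containing the dart r.\<close>
definition plane_map ::
  "'d set \<Rightarrow> ('d \<Rightarrow> 'd) \<Rightarrow> ('d \<Rightarrow> 'd) \<Rightarrow> ('d \<Rightarrow> 'v) \<Rightarrow> 'd \<Rightarrow> bool" where
  "plane_map D \<alpha> \<sigma> tail r \<longleftrightarrow>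
     finite D \<and> r \<in> D \<and>
     bij_betw \<alpha> D D \<and> bij_betw \<sigma> D D \<and>
     (\<forall>d\<in>D. \<alpha> d \<noteq> d \<and> \<alpha> (\<alpha> d) = d) \<and>
     (\<forall>d\<in>D. \<forall>e\<in>D. tail d = tail e \<longleftrightarrow> e \<in> orb \<sigma> d) \<and>
     (\<forall>d\<in>D. \<forall>e\<in>D. (d, e) \<in> ({(x, \<alpha> x) | x. x \<in> D} \<union> {(x, \<sigma> x) | x. x \<in> D})\<^sup>*) \<and>
     int (card (tail ` D)) - int (card (edges D \<alpha>)) + int (card (faces D \<alpha> \<sigma>)) = 2"

definition quadrangulation ::
  "'d set \<Rightarrow> ('d \<Rightarrow> 'd) \<Rightarrow> ('d \<Rightarrow> 'd) \<Rightarrow> ('d \<Rightarrow> 'v) \<Rightarrow> 'd \<Rightarrow> ('v \<Rightarrow> bool) \<Rightarrow> bool" where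
  "quadrangulation D \<alpha> \<sigma> tail r black \<longleftrightarrow>
     plane_map D \<alpha> \<sigma> tail r \<and>
     (\<forall>d\<in>D. tail d \<noteq> head \<alpha> tail d) \<and>
     (\<forall>d\<in>D. \<forall>e\<in>D. tail d = tail e \<and> head \<alpha> tail d = head \<alpha> tail e \<longrightarrow> d = e) \<and>
     card (tail ` D) \<ge> 4 \<and>
     (\<forall>d\<in>D. card (orb (phi \<alpha> \<sigma>) d) = 4 \<and> inj_on (head \<alpha> tail) (orb (phi \<alpha> \<sigma>) d)) \<and>
     (\<forall>d\<in>D. black (tail d) \<noteq> black (head \<alpha> tail d))"

definition degree :: "'d set \<Rightarrow> ('d \<Rightarrow> 'd) \<Rightarrow> ('d \<Rightarrow> 'v) \<Rightarrow> 'v \<Rightarrow> nat" where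
  "degree D \<alpha> tail v = card {d\<in>D. head \<alpha> tail d = v}"

text \<open>Strong labeling: lab d is the label of the angle represented by dart d.\<close>
definition strong_labeling ::
  "'d set \<Rightarrow> ('d \<Rightarrow> 'd) \<Rightarrow> ('d \<Rightarrow> 'd) \<Rightarrow> ('d \<Rightarrow> 'v) \<Rightarrow> 'd \<Rightarrow> ('v \<Rightarrow> bool)
    \<Rightarrow> 'v \<Rightarrow> 'v \<Rightarrow> ('d \<Rightarrow> nat) \<Rightarrow> bool" where
  "strong_labeling D \<alpha> \<sigma> tail r black s0 s1 lab \<longleftrightarrow>
     (\<forall>d\<in>D. lab d \<in> {0, 1}) \<and>
     \<comment> \<open>(G0)\<close>
     s0 \<noteq> s1 \<and>
     {v \<in> head \<alpha> tail ` orb (phi \<alpha> \<sigma>) r. black v} = {s0, s1} \<and>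
     (\<forall>d\<in>D. head \<alpha> tail d = s0 \<longrightarrow> lab d = 0) \<and>
     (\<forall>d\<in>D. head \<alpha> tail d = s1 \<longrightarrow> lab d = 1) \<and>
     \<comment> \<open>(G1)\<close>
     (\<forall>v \<in> tail ` D. v \<notin> {s0, s1} \<longrightarrow>
        (\<exists>d0\<in>D. \<exists>k. head \<alpha> tail d0 = v \<and> 0 < k \<and> k < degree D \<alpha> tail v \<and>
           (\<forall>i < degree D \<alpha> tail v.
              lab ((rho \<alpha> \<sigma> ^^ i) d0) = (if i < k then 1 else 0)))) \<and>
     \<comment> \<open>(G2): at head d the two angles beside edge {d, alpha d} are d' and d (rho d' = d);
         at head (alpha d) they are e' and alpha d (rho e' = alpha d)\<close>
     (\<forall>d\<in>D. \<forall>d'\<in>D. \<forall>e'\<in>D. rho \<alpha> \<sigma> d' = d \<longrightarrow> rho \<alpha> \<sigma> e' = \<alpha> d \<longrightarrow>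
        ((lab d' = lab d) \<noteq> (lab e' = lab (\<alpha> d)))) \<and>
     \<comment> \<open>(G3) bounded faces: cyclically 0,0,1,1\<close>
     (\<forall>d\<in>D. d \<notin> orb (phi \<alpha> \<sigma>) r \<longrightarrow>
        (\<exists>e \<in> orb (phi \<alpha> \<sigma>) d. lab e = 0 \<and> lab (phi \<alpha> \<sigma> e) = 0 \<and>
           lab ((phi \<alpha> \<sigma> ^^ 2) e) = 1 \<and> lab ((phi \<alpha> \<sigma> ^^ 3) e) = 1)) \<and>
     \<comment> \<open>(G3) outer face: geometric clockwise order around the outer face is the reverse
         of the phi-order; starting at the angle of s0 the labels are 0,0,1,1\<close>
     (\<exists>z \<in> orb (phi \<alpha> \<sigma>) r. head \<alpha> tail z = s0 \<and>
        lab z = 0 \<and> lab ((phi \<alpha> \<sigma> ^^ 3) z) = 0 \<and>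
        lab ((phi \<alpha> \<sigma> ^^ 2) z) = 1 \<and> lab (phi \<alpha> \<sigma> z) = 1)"

end

theory Submission imports Defs begin

lemma orb_sub: assumes "f ` D \<subseteq> D" "x \<in> D" shows "(f^^n) x \<in> D"
  using assms by (induction n) auto

lemma cancel_pow:
  assumes "inj_on f D" "f ` D \<subseteq> D" "x \<in> D" "(f^^(i+k)) x = (f^^i) x"
  shows "(f^^k) x = x"
  using assms(4)
proof (induction i)
  case 0 then show ?case by simp
next
  case (Suc i)
  have "f ((f^^(i+k)) x) = f ((f^^i) x)" using Suc.prems by simp
  moreover have "(f^^(i+k)) x \<in> D" "(f^^i) x \<in> D" using orb_sub assms by metis+
  ultimately have "(f^^(i+k)) x = (f^^i) x" using assms(1) by (meson inj_onD)
  then show ?case using Suc.IH by simp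
qed

lemma pow_mult_fix: assumes "(f^^n) x = x" shows "(f^^(n*q)) x = x"
  using assms by (induction q) (auto simp: funpow_add)

lemma period4:
  assumes "inj_on f D" "f ` D \<subseteq> D" "finite D" "x \<in> D" "card (orb f x) = 4"
  shows "(f^^4) x = x"
proof -
  have "\<not> inj_on (\<lambda>i. (f^^i) x) {..card D}"
  proof
    assume "inj_on (\<lambda>i. (f^^i) x) {..card D}"
    then have "card ((\<lambda>i. (f^^i) x) ` {..card D}) = Suc (card D)" by (simp add: card_image)
    moreover have "(\<lambda>i. (f^^i) x) ` {..card D} \<subseteq> D" using orb_sub[OF assms(2,4)] by auto
    ultimately show False using card_mono[OF assms(3)] by (metis Suc_n_not_le_n)
  qed
  then obtain i j where ij: "i < j" "(f^^i) x = (f^^j) x"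
  proof -
    obtain a b where "a \<le> card D" "b \<le> card D" "a \<noteq> b" "(f^^a) x = (f^^b) x"
      using \<open>\<not> inj_on _ _\<close> unfolding inj_on_def by auto
    then show ?thesis using that by (cases "a < b") (auto, metis not_less_iff_gr_or_eq)
  qed
  have ex: "(f^^(j-i)) x = x" using cancel_pow[OF assms(1,2,4), of i "j-i"] ij by simp
  define n where "n = (LEAST n. 0 < n \<and> (f^^n) x = x)"
  have n: "0 < n \<and> (f^^n) x = x" unfolding n_def
    by (rule LeastI[of _ "j-i"]) (use ij ex in auto)
  have nmin: "\<And>m. 0 < m \<Longrightarrow> m < n \<Longrightarrow> (f^^m) x \<noteq> x" unfolding n_def
    using not_less_Least by blast
  have "orb f x = (\<lambda>i. (f^^i) x) ` {..<n}"
  proof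
    show "orb f x \<subseteq> (\<lambda>i. (f^^i) x) ` {..<n}"
    proof
      fix y assume "y \<in> orb f x"
      then obtain m where m: "y = (f^^m) x" unfolding orb_def by auto
      have "m = m mod n + n * (m div n)" by simp
      then have "(f^^m) x = (f^^(m mod n)) ((f^^(n * (m div n))) x)"
        by (metis add.commute funpow_add comp_apply)
      also have "\<dots> = (f^^(m mod n)) x" using pow_mult_fix[where f=f and n=n and x=x and q="m div n"] n by simp
      finally show "y \<in> (\<lambda>i. (f^^i) x) ` {..<n}" using m n by auto
    qed
    show "(\<lambda>i. (f^^i) x) ` {..<n} \<subseteq> orb f x" unfolding orb_def by auto
  qed
  moreover have "inj_on (\<lambda>i. (f^^i) x) {..<n}"
  proof (rule inj_onI)
    fix a b assume ab: "a \<in> {..<n}" "b \<in> {..<n}" "(f^^a) x = (f^^b) x"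
    show "a = b"
    proof (rule ccontr)
      assume "a \<noteq> b"
      then consider "a < b" | "b < a" by linarith
      then show False
      proof cases
        case 1
        have "(f^^(b-a)) x = x" using cancel_pow[OF assms(1,2,4), of a "b-a"] ab 1 by simp
        then show False using nmin[of "b-a"] 1 ab by (simp add: less_imp_diff_less)
      next
        case 2
        have "(f^^(a-b)) x = x" using cancel_pow[OF assms(1,2,4), of b "a-b"] ab 2 by simp
        then show False using nmin[of "a-b"] 2 ab by (simp add: less_imp_diff_less)
      qed
    qed
  qed
  ultimately have "card (orb f x) = n" by (simp add: card_image)
  then show ?thesis using n assms(5) by simp
qed


lemma pow_mod4: assumes "(f^^4) x = x" shows "(f^^n) x = (f^^(n mod 4)) x"
proof -
  have "n = n mod 4 + 4 * (n div 4)" by simp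
  then have "(f^^n) x = (f^^(n mod 4)) ((f^^(4 * (n div 4))) x)"
    by (metis add.commute funpow_add comp_apply)
  also have "\<dots> = (f^^(n mod 4)) x" using pow_mult_fix[where f=f and n=4 and x=x and q="n div 4"] assms by simp
  finally show ?thesis .
qed

lemma orb_sub4: assumes "(f^^4) x = x" shows "orb f x \<subseteq> {x, f x, f (f x), f (f (f x))}"
proof
  fix y assume "y \<in> orb f x"
  then obtain n where y: "y = (f^^n) x" unfolding orb_def by auto
  have "y = (f^^(n mod 4)) x" using y pow_mod4[OF assms] by simp
  moreover have "n mod 4 < 4" by simp
  then have "n mod 4 = 0 \<or> n mod 4 = 1 \<or> n mod 4 = 2 \<or> n mod 4 = 3" by linarith
  ultimately show "y \<in> {x, f x, f (f x), f (f (f x))}"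
    by (auto simp: numeral_2_eq_2 numeral_3_eq_3)
qed

lemma orb_eq4: assumes "(f^^4) x = x" "y \<in> orb f x" shows "orb f y = orb f x"
proof -
  obtain k where y: "y = (f^^k) x" using assms(2) unfolding orb_def by auto
  have "(f^^(3*k + k)) x = (f^^(3*k)) ((f^^k) x)" by (simp only: funpow_add comp_apply)
  moreover have "3*k+k = 4*k" by simp
  moreover have "(f^^(4*k)) x = x" using pow_mult_fix[where f=f and n=4 and x=x and q=k] assms(1) by simp
  ultimately have x: "x = (f^^(3*k)) y" using y by simp
  show ?thesis
  proof
    show "orb f y \<subseteq> orb f x"
    proof
      fix z assume "z \<in> orb f y"
      then obtain m where "z = (f^^m) y" unfolding orb_def by auto
      then have "z = (f^^(m+k)) x" using y by (simp only: funpow_add comp_apply)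
      then show "z \<in> orb f x" unfolding orb_def by auto
    qed
    show "orb f x \<subseteq> orb f y"
    proof
      fix z assume "z \<in> orb f x"
      then obtain m where "z = (f^^m) x" unfolding orb_def by auto
      then have "z = (f^^(m+3*k)) y" using x by (simp only: funpow_add comp_apply)
      then show "z \<in> orb f y" unfolding orb_def by auto
    qed
  qed
qed

lemma self_orb: "x \<in> orb f x" unfolding orb_def by (auto intro: exI[of _ 0])
lemma next_orb: "f x \<in> orb f x" unfolding orb_def by (auto intro: exI[of _ 1])

context
  fixes D :: "'d set" and \<alpha> \<sigma> :: "'d \<Rightarrow> 'd" and tail :: "'d \<Rightarrow> 'v"
    and r :: 'd and black :: "'v \<Rightarrow> bool" and s0 s1 :: 'v and lab :: "'d \<Rightarrow> nat"
  assumes Q: "quadrangulation D \<alpha> \<sigma> tail r black"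
    and L: "strong_labeling D \<alpha> \<sigma> tail r black s0 s1 lab"
begin

abbreviation "ph \<equiv> phi \<alpha> \<sigma>"
definition "Pf d \<longleftrightarrow> (\<forall>e\<in>orb ph d. (lab e \<noteq> lab (ph e)) = black (head \<alpha> tail e))"
definition "Nf d \<longleftrightarrow> (\<forall>e\<in>orb ph d. (lab e \<noteq> lab (ph e)) = (\<not> black (head \<alpha> tail e)))"

lemma finD: "finite D" and rD: "r \<in> D" and bija: "bij_betw \<alpha> D D" and bijs: "bij_betw \<sigma> D D"
  and invol: "\<And>d. d \<in> D \<Longrightarrow> \<alpha> (\<alpha> d) = d"
  and tails: "\<And>d e. d \<in> D \<Longrightarrow> e \<in> D \<Longrightarrow> tail d = tail e \<longleftrightarrow> e \<in> orb \<sigma> d"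
  and conn: "\<And>d e. d \<in> D \<Longrightarrow> e \<in> D \<Longrightarrow> (d, e) \<in> ({(x, \<alpha> x) | x. x \<in> D} \<union> {(x, \<sigma> x) | x. x \<in> D})\<^sup>*"
  and proper: "\<And>d. d \<in> D \<Longrightarrow> black (tail d) \<noteq> black (head \<alpha> tail d)"
  and card4: "\<And>d. d \<in> D \<Longrightarrow> card (orb ph d) = 4"
  using Q unfolding quadrangulation_def plane_map_def by auto

lemma labs: "\<And>d. d \<in> D \<Longrightarrow> lab d \<in> {0,1}"
  and G2: "\<And>d d' e'. d\<in>D \<Longrightarrow> d'\<in>D \<Longrightarrow> e'\<in>D \<Longrightarrow> rho \<alpha> \<sigma> d' = d \<Longrightarrow> rho \<alpha> \<sigma> e' = \<alpha> d \<Longrightarrow>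
        ((lab d' = lab d) \<noteq> (lab e' = lab (\<alpha> d)))"
  and G3: "\<And>d. d\<in>D \<Longrightarrow> d \<notin> orb ph r \<Longrightarrow>
        (\<exists>e \<in> orb ph d. lab e = 0 \<and> lab (ph e) = 0 \<and>
           lab ((ph ^^ 2) e) = 1 \<and> lab ((ph ^^ 3) e) = 1)"
  and G3o: "\<exists>z \<in> orb ph r. head \<alpha> tail z = s0 \<and>
        lab z = 0 \<and> lab ((ph ^^ 3) z) = 0 \<and>
        lab ((ph ^^ 2) z) = 1 \<and> lab (ph z) = 1"
  and s0b: "black s0"
  using L unfolding strong_labeling_def by auto

lemma phD: "d \<in> D \<Longrightarrow> ph d \<in> D"
  using bija bijs unfolding phi_def bij_betw_def by auto

lemma bijph: "bij_betw ph D D"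
proof -
  have "ph = \<sigma> \<circ> \<alpha>" unfolding phi_def by auto
  then show ?thesis using bij_betw_trans[OF bija bijs] by simp
qed

lemma p4: "d \<in> D \<Longrightarrow> (ph^^4) d = d"
  using period4[of ph D d] bijph finD card4 unfolding bij_betw_def by auto

lemma orbD: "d \<in> D \<Longrightarrow> e \<in> orb ph d \<Longrightarrow> e \<in> D"
proof -
  assume d: "d \<in> D" and "e \<in> orb ph d"
  then obtain n where "e = (ph^^n) d" unfolding orb_def by auto
  moreover have "ph ` D \<subseteq> D" using phD by auto
  ultimately show "e \<in> D" using orb_sub d by metis
qed

lemma oeq: "d \<in> D \<Longrightarrow> e \<in> orb ph d \<Longrightarrow> orb ph e = orb ph d"
  by (rule orb_eq4[OF p4])

lemma tail_ph: "d \<in> D \<Longrightarrow> tail (ph d) = head \<alpha> tail d"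
proof -
  assume d: "d \<in> D"
  have ad: "\<alpha> d \<in> D" using bija d unfolding bij_betw_def by auto
  have "\<sigma> (\<alpha> d) \<in> orb \<sigma> (\<alpha> d)" by (rule next_orb)
  moreover have "\<sigma> (\<alpha> d) \<in> D" using bijs ad unfolding bij_betw_def by auto
  ultimately have "tail (\<alpha> d) = tail (\<sigma> (\<alpha> d))" using tails[OF ad, of "\<sigma> (\<alpha> d)"] by simp
  then show ?thesis unfolding phi_def head_def by simp
qed

lemma col: "d \<in> D \<Longrightarrow> black (head \<alpha> tail (ph d)) \<noteq> black (head \<alpha> tail d)"
proof -
  assume d: "d \<in> D"
  show ?thesis using proper[OF phD[OF d]] tail_ph[OF d] by simp
qed

lemma pat:
  assumes e: "e \<in> D" and l: "lab e = a" "lab (ph e) = a" "lab (ph (ph e)) = b" "lab (ph (ph (ph e))) = b" "a \<noteq> b"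
  shows "Pf e \<or> Nf e"
proof -
  have e4: "ph (ph (ph (ph e))) = e" using p4[OF e] by (simp add: numeral_eq_Suc)
  have D1: "ph e \<in> D" "ph (ph e) \<in> D" "ph (ph (ph e)) \<in> D" using phD e by auto
  have c: "black (head \<alpha> tail (ph e)) \<noteq> black (head \<alpha> tail e)"
    "black (head \<alpha> tail (ph (ph e))) \<noteq> black (head \<alpha> tail (ph e))"
    "black (head \<alpha> tail (ph (ph (ph e)))) \<noteq> black (head \<alpha> tail (ph (ph e)))"
    using col[OF e] col[OF D1(1)] col[OF D1(2)] by auto
  have sub: "orb ph e \<subseteq> {e, ph e, ph (ph e), ph (ph (ph e))}" using orb_sub4[OF p4[OF e]] .
  show ?thesis
  proof (cases "black (head \<alpha> tail e)")
    case True
    have "Nf e" unfolding Nf_def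
    proof
      fix y assume "y \<in> orb ph e"
      then have "y = e \<or> y = ph e \<or> y = ph (ph e) \<or> y = ph (ph (ph e))" using sub by blast
      then show "(lab y \<noteq> lab (ph y)) = (\<not> black (head \<alpha> tail y))"
        using c l e4 \<open>black (head \<alpha> tail e)\<close> by (elim disjE) auto
    qed
    then show ?thesis ..
  next
    case False
    have "Pf e" unfolding Pf_def
    proof
      fix y assume "y \<in> orb ph e"
      then have "y = e \<or> y = ph e \<or> y = ph (ph e) \<or> y = ph (ph (ph e))" using sub by blast
      then show "(lab y \<noteq> lab (ph y)) = (black (head \<alpha> tail y))"
        using c l e4 \<open>\<not> black (head \<alpha> tail e)\<close> by (elim disjE) auto
    qed
    then show ?thesis ..
  qed
qed

lemma pow23: "(f^^2) x = f (f x)" "(f^^3) x = f (f (f x))"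
  by (simp_all add: numeral_2_eq_2 numeral_3_eq_3)

lemma outer: "Pf r"
proof -
  obtain z where z: "z \<in> orb ph r" "head \<alpha> tail z = s0" "lab z = 0" "lab (ph (ph (ph z))) = 0"
    "lab (ph (ph z)) = 1" "lab (ph z) = 1" using G3o unfolding pow23 by blast
  have zD: "z \<in> D" using orbD[OF rD z(1)] .
  have e4: "ph (ph (ph (ph z))) = z" using p4[OF zD] by (simp add: numeral_eq_Suc)
  have D1: "ph z \<in> D" "ph (ph z) \<in> D" "ph (ph (ph z)) \<in> D" using phD zD by auto
  have c: "black (head \<alpha> tail (ph z)) \<noteq> black (head \<alpha> tail z)"
    "black (head \<alpha> tail (ph (ph z))) \<noteq> black (head \<alpha> tail (ph z))"
    "black (head \<alpha> tail (ph (ph (ph z)))) \<noteq> black (head \<alpha> tail (ph (ph z)))"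
    using col[OF zD] col[OF D1(1)] col[OF D1(2)] by auto
  have sub: "orb ph z \<subseteq> {z, ph z, ph (ph z), ph (ph (ph z))}" using orb_sub4[OF p4[OF zD]] .
  have "Pf z" unfolding Pf_def
  proof
    fix y assume "y \<in> orb ph z"
    then have "y = z \<or> y = ph z \<or> y = ph (ph z) \<or> y = ph (ph (ph z))" using sub by blast
    then show "(lab y \<noteq> lab (ph y)) = black (head \<alpha> tail y)"
      using c z e4 s0b by (elim disjE) auto
  qed
  moreover have "orb ph z = orb ph r" using oeq[OF rD z(1)] .
  ultimately show ?thesis unfolding Pf_def by simp
qed

lemma PN: assumes d: "d \<in> D" shows "Pf d \<or> Nf d"
proof (cases "d \<in> orb ph r")
  case True
  then have "orb ph d = orb ph r" using oeq[OF rD] by blast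
  then show ?thesis using outer unfolding Pf_def by simp
next
  case False
  then obtain e where e: "e \<in> orb ph d" "lab e = 0" "lab (ph e) = 0"
    "lab (ph (ph e)) = 1" "lab (ph (ph (ph e))) = 1" using G3[OF d] unfolding pow23 by blast
  have eD: "e \<in> D" using orbD[OF d e(1)] .
  have "Pf e \<or> Nf e" using pat[OF eD e(2-5)] by simp
  moreover have "orb ph e = orb ph d" using oeq[OF d e(1)] .
  ultimately show ?thesis unfolding Pf_def Nf_def by simp
qed

lemma edge:
  assumes y: "y \<in> D" and y': "y' \<in> D" and eq: "ph y' = \<alpha> (ph y)"
  shows "(lab y \<noteq> lab (ph y)) \<noteq> (lab y' \<noteq> lab (ph y'))"
    and "black (head \<alpha> tail y') \<noteq> black (head \<alpha> tail y)"
proof -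
  have py: "ph y \<in> D" using phD[OF y] .
  have r1: "rho \<alpha> \<sigma> y' = ph y" unfolding rho_def using eq invol[OF py] unfolding phi_def by simp
  have r2: "rho \<alpha> \<sigma> y = \<alpha> (ph y)" unfolding rho_def phi_def by simp
  have g: "(lab y' = lab (ph y)) \<noteq> (lab y = lab (ph y'))" using G2[OF py y' y r1 r2] eq by simp
  have "lab y \<in> {0,1}" "lab y' \<in> {0,1}" "lab (ph y) \<in> {0,1}" "lab (ph y') \<in> {0,1}"
    using labs[OF y] labs[OF y'] labs[OF py] labs[OF phD[OF y']] by auto
  then show "(lab y \<noteq> lab (ph y)) \<noteq> (lab y' \<noteq> lab (ph y'))" using g by (auto; presburger)
  have "head \<alpha> tail y' = tail (ph y')" using tail_ph[OF y'] by simp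
  also have "\<dots> = head \<alpha> tail (ph y)" using eq unfolding head_def by simp
  finally show "black (head \<alpha> tail y') \<noteq> black (head \<alpha> tail y)" using col[OF y] by simp
qed

lemma Pf_orb: "d \<in> D \<Longrightarrow> e \<in> orb ph d \<Longrightarrow> Pf d \<Longrightarrow> Pf e"
proof -
  assume a: "d \<in> D" "e \<in> orb ph d" "Pf d"
  have "orb ph e = orb ph d" using oeq[OF a(1,2)] .
  then show "Pf e" using a(3) unfolding Pf_def by simp
qed

lemma Pf_alpha: assumes x: "x \<in> D" and P: "Pf x" shows "Pf (\<alpha> x)"
proof -
  have "x \<in> ph ` D" using bijph x unfolding bij_betw_def by simp
  then obtain y where y: "y \<in> D" "x = ph y" by (rule imageE) auto
  have ax: "\<alpha> x \<in> D" using bija x unfolding bij_betw_def by blast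
  have "\<alpha> x \<in> ph ` D" using bijph ax unfolding bij_betw_def by simp
  then obtain y' where y': "y' \<in> D" "\<alpha> x = ph y'" by (rule imageE) auto
  have "x \<in> orb ph y" using next_orb[of ph y] y(2) by simp
  then have "orb ph x = orb ph y" using oeq[OF y(1)] by simp
  then have Py: "Pf y" using P unfolding Pf_def by simp
  have ed: "(lab y \<noteq> lab (ph y)) \<noteq> (lab y' \<noteq> lab (ph y'))"
    "black (head \<alpha> tail y') \<noteq> black (head \<alpha> tail y)"
  proof -
    have eq': "ph y' = \<alpha> (ph y)" using y'(2) y(2) by simp
    show "(lab y \<noteq> lab (ph y)) \<noteq> (lab y' \<noteq> lab (ph y'))" by (rule edge(1)[OF y(1) y'(1) eq'])
    show "black (head \<alpha> tail y') \<noteq> black (head \<alpha> tail y)" by (rule edge(2)[OF y(1) y'(1) eq'])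
  qed
  have Py': "Pf y'"
  proof -
    have "\<not> Nf y'"
    proof
      assume "Nf y'"
      then have "(lab y' \<noteq> lab (ph y')) = (\<not> black (head \<alpha> tail y'))" using bspec[OF \<open>Nf y'\<close>[unfolded Nf_def] self_orb] by simp
      moreover have "(lab y \<noteq> lab (ph y)) = black (head \<alpha> tail y)" using bspec[OF Py[unfolded Pf_def] self_orb] by simp
      ultimately show False using ed by (cases "black (head \<alpha> tail y)") simp_all
    qed
    then show ?thesis using PN[OF y'(1)] by blast
  qed
  have "\<alpha> x \<in> orb ph y'" using next_orb[of ph y'] y'(2) by simp
  then show ?thesis using Pf_orb[OF y'(1) _ Py'] by simp
qed

lemma Pf_sigma: assumes x: "x \<in> D" and P: "Pf x" shows "Pf (\<sigma> x)"
proof -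
  have ax: "\<alpha> x \<in> D" using bija x unfolding bij_betw_def by blast
  have "\<sigma> x = ph (\<alpha> x)" unfolding phi_def using invol[OF x] by simp
  then have "\<sigma> x \<in> orb ph (\<alpha> x)" using next_orb[of ph "\<alpha> x"] by simp
  then show ?thesis using Pf_orb[OF ax _ Pf_alpha[OF x P]] by simp
qed

lemma all_Pf: assumes d: "d \<in> D" shows "Pf d"
proof -
  have "(r, d) \<in> ({(x, \<alpha> x) | x. x \<in> D} \<union> {(x, \<sigma> x) | x. x \<in> D})\<^sup>*" using conn[OF rD d] .
  then show ?thesis
  proof (induction rule: rtrancl_induct)
    case base then show ?case using outer .
  next
    case (step b c)
    then obtain x where "x \<in> D" "b = x" "c = \<alpha> x \<or> c = \<sigma> x" by blast
    then show ?case using Pf_alpha Pf_sigma step.IH by auto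
  qed
qed

lemma main: "\<forall>d\<in>D. d \<notin> orb (phi \<alpha> \<sigma>) r \<longrightarrow>
           (lab d \<noteq> lab (phi \<alpha> \<sigma> d) \<longleftrightarrow>
              black (head \<alpha> tail d) \<and> \<not> black (head \<alpha> tail (phi \<alpha> \<sigma> d)))"
proof (intro ballI impI)
  fix d assume d: "d \<in> D"
  have "(lab d \<noteq> lab (ph d)) = black (head \<alpha> tail d)" using bspec[OF all_Pf[OF d, unfolded Pf_def] self_orb] by simp
  then show "(lab d \<noteq> lab (phi \<alpha> \<sigma> d) \<longleftrightarrow>
              black (head \<alpha> tail d) \<and> \<not> black (head \<alpha> tail (phi \<alpha> \<sigma> d)))"
    using col[OF d] by auto
qed

end

theorem lemma9:
  fixes D :: "'d set" and \<alpha> \<sigma> :: "'d \<Rightarrow> 'd" and tail :: "'d \<Rightarrow> 'v"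
    and r :: 'd and black :: "'v \<Rightarrow> bool" and s0 s1 :: 'v and lab :: "'d \<Rightarrow> nat"
  assumes "quadrangulation D \<alpha> \<sigma> tail r black"
    and "strong_labeling D \<alpha> \<sigma> tail r black s0 s1 lab"
  shows "\<forall>d\<in>D. d \<notin> orb (phi \<alpha> \<sigma>) r \<longrightarrow>
           (lab d \<noteq> lab (phi \<alpha> \<sigma> d) \<longleftrightarrow>
              black (head \<alpha> tail d) \<and> \<not> black (head \<alpha> tail (phi \<alpha> \<sigma> d)))"
  using main[OF assms] .

end
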